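(* Let $D$ be an integral domain, $\mathcal{T}$ a finite multiset of elements of $D$, and $f=\prod_{r\in\mathcal{T}}(x-r)$ (with multiplicities). If $Q$ is a non-zero prime ideal of $D$, then $\mathsf{d}(f)\subseteq Q$ if and only if $\mathcal{T}$ contains a complete system of residues modulo $Q$. Furthermore, suppose $D$ is a Dedekind domain, $Q$ is a non-zero prime ideal of $D$, and $\mathcal{T}=\mathcal{T}_0\uplus\mathcal{T}_1\uplus\cdots\uplus\mathcal{T}_e$ (multiset disjoint union) such that: (1) for all $1\le i\le e$, $\mathcal{T}_i$ is a complete system of residues modulo $Q$, and the respective representatives of the same residue class modulo $Q$ in the different $\mathcal{T}_i$ are congruent to each other modulo $Q^2$; (2) there exists $z\in D$ such that $s\not\equiv z \pmod Q$ for all $s\in\mathcal{T}_0$. Then $\mathsf{v}_Q(\mathsf{d}(f))=e$.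
   Context: For a polynomial $g$ with $g(D)\subseteq D$, the fixed divisor $\mathsf{d}(g)$ is the ideal of $D$ generated by $\{g(a)\mid a\in D\}$. For a Dedekind domain $D$ and a maximal ideal $Q$, $\mathsf{v}_Q$ is the $Q$-adic valuation; for a non-zero ideal $I$, $\mathsf{v}_Q(I)=\min\{\mathsf{v}_Q(a)\mid a\in I\}$ (the exponent of $Q$ in the prime factorization of $I$). For multisets $S,T$, $S\uplus T$ is the multiset with multiplicities added. *)

theory Defs
  imports "HOL-Computational_Algebra.Polynomial" "HOL-Computational_Algebra.Fraction_Field"
          "HOL-Library.Multiset"
begin

definition is_ideal :: "'a::comm_ring_1 set \<Rightarrow> bool" where
  "is_ideal I \<longleftrightarrow> 0 \<in> I \<and> (\<forall>a\<in>I. \<forall>b\<in>I. a + b \<in> I) \<and> (\<forall>a\<in>I. \<forall>r. r * a \<in> I)"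

definition prime_ideal :: "'a::comm_ring_1 set \<Rightarrow> bool" where
  "prime_ideal P \<longleftrightarrow> is_ideal P \<and> P \<noteq> UNIV \<and> (\<forall>a b. a * b \<in> P \<longrightarrow> a \<in> P \<or> b \<in> P)"

definition maximal_ideal :: "'a::comm_ring_1 set \<Rightarrow> bool" where
  "maximal_ideal M \<longleftrightarrow> is_ideal M \<and> M \<noteq> UNIV \<and>
     (\<forall>J. is_ideal J \<and> M \<subseteq> J \<longrightarrow> J = M \<or> J = UNIV)"

definition ideal_span :: "'a::comm_ring_1 set \<Rightarrow> 'a set" where
  "ideal_span S = \<Inter>{I. is_ideal I \<and> S \<subseteq> I}"

definition ideal_prod :: "'a::comm_ring_1 set \<Rightarrow> 'a set \<Rightarrow> 'a set" where
  "ideal_prod I J = ideal_span {a * b | a b. a \<in> I \<and> b \<in> J}"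

primrec ideal_pow :: "'a::comm_ring_1 set \<Rightarrow> nat \<Rightarrow> 'a set" where
  "ideal_pow I 0 = UNIV"
| "ideal_pow I (Suc n) = ideal_prod I (ideal_pow I n)"

definition fixed_divisor :: "'a::comm_ring_1 poly \<Rightarrow> 'a set" where
  "fixed_divisor g = ideal_span (range (poly g))"

definition elem_val :: "'a::comm_ring_1 set \<Rightarrow> 'a \<Rightarrow> nat" where
  "elem_val Q a = (GREATEST n. a \<in> ideal_pow Q n)"

definition ideal_val :: "'a::comm_ring_1 set \<Rightarrow> 'a set \<Rightarrow> nat" where
  "ideal_val Q I = (LEAST n. \<exists>a\<in>I. a \<noteq> 0 \<and> elem_val Q a = n)"

definition contains_residue_system :: "'a::comm_ring_1 set \<Rightarrow> 'a multiset \<Rightarrow> bool" where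
  "contains_residue_system Q T \<longleftrightarrow> (\<forall>a. \<exists>t. t \<in># T \<and> a - t \<in> Q)"

definition complete_residue_system :: "'a::comm_ring_1 set \<Rightarrow> 'a multiset \<Rightarrow> bool" where
  "complete_residue_system Q T \<longleftrightarrow> (\<forall>a. size (filter_mset (\<lambda>t. a - t \<in> Q) T) = 1)"

definition noetherian :: "'a::comm_ring_1 itself \<Rightarrow> bool" where
  "noetherian _ \<longleftrightarrow> (\<forall>I::'a set. is_ideal I \<longrightarrow> (\<exists>F. finite F \<and> I = ideal_span F))"

definition integrally_closed :: "'a::idom itself \<Rightarrow> bool" where
  "integrally_closed _ \<longleftrightarrow>
     (\<forall>(x::'a fract) (p::'a poly). lead_coeff p = 1 \<and> poly (map_poly (\<lambda>a. Fract a 1) p) x = 0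
        \<longrightarrow> (\<exists>a. x = Fract a 1))"

definition dedekind_domain :: "'a::idom itself \<Rightarrow> bool" where
  "dedekind_domain T \<longleftrightarrow> noetherian T \<and> integrally_closed T \<and>
     (\<forall>P::'a set. prime_ideal P \<and> P \<noteq> {0} \<longrightarrow> maximal_ideal P)"

end

theory Submission
  imports Defs
begin


lemma span_ideal: "is_ideal (ideal_span S)"
  unfolding ideal_span_def is_ideal_def by auto

lemma span_sub: "S \<subseteq> ideal_span S"
  unfolding ideal_span_def by auto

lemma span_least: "is_ideal I \<Longrightarrow> S \<subseteq> I \<Longrightarrow> ideal_span S \<subseteq> I"
  unfolding ideal_span_def by auto

lemma ideal_0: "is_ideal I \<Longrightarrow> 0 \<in> I" unfolding is_ideal_def by auto
lemma ideal_add: "is_ideal I \<Longrightarrow> a \<in> I \<Longrightarrow> b \<in> I \<Longrightarrow> a + b \<in> I" unfolding is_ideal_def by auto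
lemma ideal_multL: "is_ideal I \<Longrightarrow> a \<in> I \<Longrightarrow> r * a \<in> I" unfolding is_ideal_def by auto
lemma ideal_multR: "is_ideal I \<Longrightarrow> a \<in> I \<Longrightarrow> a * r \<in> I" unfolding is_ideal_def by (metis mult.commute)
lemma ideal_neg: "is_ideal I \<Longrightarrow> a \<in> I \<Longrightarrow> - a \<in> I"
  using ideal_multL[of I a "-1"] by simp
lemma ideal_diff: "is_ideal I \<Longrightarrow> a \<in> I \<Longrightarrow> b \<in> I \<Longrightarrow> a - b \<in> I"
  using ideal_add[of I a "-b"] ideal_neg[of I b] by simp

lemma prime_one: "prime_ideal Q \<Longrightarrow> (1::'a::comm_ring_1) \<notin> Q"
  unfolding prime_ideal_def using ideal_multL[of Q 1] by (metis UNIV_eq_I mult.right_neutral)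

lemma prime_mult: "prime_ideal Q \<Longrightarrow> a \<notin> Q \<Longrightarrow> b \<notin> Q \<Longrightarrow> a * b \<notin> Q"
  unfolding prime_ideal_def by blast

lemma pow_ideal: "is_ideal (ideal_pow Q n)"
  by (cases n) (auto simp: ideal_prod_def span_ideal, auto simp: is_ideal_def)

lemma pow_Suc_mem: "a \<in> Q \<Longrightarrow> b \<in> ideal_pow Q n \<Longrightarrow> a * b \<in> ideal_pow Q (Suc n)"
  unfolding ideal_pow.simps ideal_prod_def by (rule subsetD[OF span_sub]) blast

lemma pow_Suc_sub: "is_ideal Q \<Longrightarrow> ideal_pow Q (Suc n) \<subseteq> ideal_pow Q n"
  unfolding ideal_pow.simps ideal_prod_def
  by (rule span_least[OF pow_ideal]) (auto intro: ideal_multL[OF pow_ideal])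

lemma pow_mono: "is_ideal Q \<Longrightarrow> m \<le> n \<Longrightarrow> ideal_pow Q n \<subseteq> ideal_pow Q m"
proof (induction n)
  case 0 then show ?case by simp
next
  case (Suc n) then show ?case using pow_Suc_sub[of Q n] by (cases "m = Suc n") auto
qed

lemma pow_one: "is_ideal Q \<Longrightarrow> ideal_pow Q 1 = Q"
proof
  assume Q: "is_ideal Q"
  show "ideal_pow Q 1 \<subseteq> Q" by (simp add: ideal_prod_def, rule span_least[OF Q]) (auto intro: ideal_multR[OF Q])
  show "Q \<subseteq> ideal_pow Q 1"
  proof
    fix x assume "x \<in> Q"
    then have "x * 1 \<in> ideal_pow Q (Suc 0)" by (intro pow_Suc_mem) auto
    then show "x \<in> ideal_pow Q 1" by simp
  qed
qed

lemma prime_prod_mset: "prime_ideal Q \<Longrightarrow> (prod_mset (image_mset g M) \<in> Q) = (\<exists>x\<in>#M. g x \<in> Q)"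
proof (induction M)
  case empty then show ?case using prime_one by auto
next
  case (add x M)
  have I: "is_ideal Q" using add.prems prime_ideal_def by blast
  show ?case using add prime_mult[OF add.prems] ideal_multL[OF I] ideal_multR[OF I] by auto
qed

lemma fin_chain:
  assumes "finite F" "F \<subseteq> \<Union>C" "C \<noteq> {}" "\<forall>A\<in>C. \<forall>B\<in>C. A \<subseteq> B \<or> B \<subseteq> A"
  shows "\<exists>X\<in>C. F \<subseteq> X"
  using assms
proof (induction F rule: finite_induct)
  case empty then show ?case by auto
next
  case (insert x F)
  then obtain X where X: "X \<in> C" "F \<subseteq> X" by auto
  from insert.prems obtain Y where Y: "Y \<in> C" "x \<in> Y" by auto
  from insert.prems(3) X Y have "X \<subseteq> Y \<or> Y \<subseteq> X" by blast
  then show ?case using X Y by blast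
qed

lemma noeth_max:
  assumes N: "noetherian TYPE('a::comm_ring_1)" and S: "S \<noteq> {}" and I: "\<forall>I\<in>S. is_ideal (I::'a set)"
  shows "\<exists>M\<in>S. \<forall>X\<in>S. M \<subseteq> X \<longrightarrow> X = M"
proof (rule Zorn_Lemma2, intro ballI)
  fix C assume C: "C \<in> chains S"
  show "\<exists>U\<in>S. \<forall>X\<in>C. X \<subseteq> U"
  proof (cases "C = {}")
    case True then show ?thesis using S by auto
  next
    case False
    have CS: "C \<subseteq> S" and ch: "\<forall>A\<in>C. \<forall>B\<in>C. A \<subseteq> B \<or> B \<subseteq> A"
      using C unfolding chains_def chain_subset_def by auto
    have CI: "\<And>A. A \<in> C \<Longrightarrow> is_ideal A" using CS I by blast
    have "is_ideal (\<Union>C)" unfolding is_ideal_def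
    proof (intro conjI ballI allI)
      obtain A where "A \<in> C" using False by auto
      then show "0 \<in> \<Union>C" using CI ideal_0 by blast
    next
      fix a b assume "a \<in> \<Union>C" "b \<in> \<Union>C"
      then obtain A B where AB: "A \<in> C" "B \<in> C" "a \<in> A" "b \<in> B" by auto
      have "A \<subseteq> B \<or> B \<subseteq> A" using ch AB by blast
      then show "a + b \<in> \<Union>C" using AB CI ideal_add by blast
    next
      fix a r assume "a \<in> \<Union>C"
      then obtain A where "A \<in> C" "a \<in> A" by auto
      then show "r * a \<in> \<Union>C" using CI ideal_multL by blast
    qed
    then obtain F where F: "finite F" "\<Union>C = ideal_span F" using N unfolding noetherian_def by blast
    have "F \<subseteq> \<Union>C" using F span_sub by blast
    then obtain X where X: "X \<in> C" "F \<subseteq> X" using fin_chain[OF F(1) _ False ch] by blast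
    then have "\<Union>C \<subseteq> X" using F span_least CI by metis
    then show ?thesis using X CS by blast
  qed
qed

definition locpr :: "'a::comm_ring_1 set \<Rightarrow> 'a \<Rightarrow> bool" where
  "locpr Q p \<longleftrightarrow> p \<in> Q \<and> p \<noteq> 0 \<and> (\<forall>q\<in>Q. \<exists>s d. s \<notin> Q \<and> s * q = p * d)"

lemma V:
  assumes P: "prime_ideal Q" and L: "locpr Q p"
  shows "x \<in> ideal_pow Q n \<Longrightarrow> \<exists>s d. s \<notin> Q \<and> s * x = p ^ n * d"
proof (induction n arbitrary: x)
  case 0
  then show ?case using prime_one[OF P] by (intro exI[of _ 1] exI[of _ x]) auto
next
  case (Suc n)
  define I where "I = {x. \<exists>s d. s \<notin> Q \<and> s * x = p ^ Suc n * d}"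
  have "is_ideal I" unfolding is_ideal_def I_def
  proof (intro conjI ballI allI)
    show "0 \<in> {x. \<exists>s d. s \<notin> Q \<and> s * x = p ^ Suc n * d}"
    proof -
      have "(1::'a) * 0 = p ^ Suc n * 0" by simp
      then show ?thesis using prime_one[OF P] by blast
    qed
  next
    fix a b assume "a \<in> {x. \<exists>s d. s \<notin> Q \<and> s * x = p ^ Suc n * d}" "b \<in> {x. \<exists>s d. s \<notin> Q \<and> s * x = p ^ Suc n * d}"
    then obtain s1 d1 s2 d2 where "s1 \<notin> Q" "s1 * a = p ^ Suc n * d1" "s2 \<notin> Q" "s2 * b = p ^ Suc n * d2" by auto
    then have "s1 * s2 \<notin> Q \<and> (s1 * s2) * (a + b) = p ^ Suc n * (s2 * d1 + s1 * d2)"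
      using prime_mult[OF P] by (simp add: algebra_simps) (metis mult.assoc mult.commute)
    then show "a + b \<in> {x. \<exists>s d. s \<notin> Q \<and> s * x = p ^ Suc n * d}" by blast
  next
    fix a r assume "a \<in> {x. \<exists>s d. s \<notin> Q \<and> s * x = p ^ Suc n * d}"
    then obtain s1 d1 where "s1 \<notin> Q" "s1 * a = p ^ Suc n * d1" by auto
    then have "s1 * (r * a) = p ^ Suc n * (r * d1)" by (metis mult.assoc mult.left_commute)
    then show "r * a \<in> {x. \<exists>s d. s \<notin> Q \<and> s * x = p ^ Suc n * d}" using \<open>s1 \<notin> Q\<close> by blast
  qed
  moreover have "{a * b |a b. a \<in> Q \<and> b \<in> ideal_pow Q n} \<subseteq> I"
  proof safe
    fix a b assume "a \<in> Q" "b \<in> ideal_pow Q n"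
    then obtain s1 d1 s2 d2 where "s1 \<notin> Q" "s1 * a = p * d1" "s2 \<notin> Q" "s2 * b = p ^ n * d2"
      using Suc.IH L unfolding locpr_def by blast
    then have "s1 * s2 \<notin> Q \<and> (s1 * s2) * (a * b) = p ^ Suc n * (d1 * d2)"
      using prime_mult[OF P] by (simp add: algebra_simps) (metis mult.assoc mult.commute)
    then show "a * b \<in> I" unfolding I_def by blast
  qed
  ultimately have "ideal_pow Q (Suc n) \<subseteq> I" unfolding ideal_pow.simps ideal_prod_def by (rule span_least)
  then show ?case using Suc.prems unfolding I_def by blast
qed

lemma krull:
  assumes P: "prime_ideal Q" and L: "locpr Q p" and N: "noetherian TYPE('a::idom)" and x: "(x::'a) \<noteq> 0"
  shows "\<exists>n. x \<notin> ideal_pow Q n"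
proof (rule ccontr)
  assume H: "\<not> (\<exists>n. x \<notin> ideal_pow Q n)"
  define J where "J n = {y. \<exists>s r. s \<notin> Q \<and> s * y * p ^ n = r * x}" for n
  have JI: "is_ideal (J n)" for n unfolding is_ideal_def
  proof (intro conjI ballI allI)
    have "(1::'a) * 0 * p ^ n = 0 * x" by simp
    then show "0 \<in> J n" unfolding J_def using prime_one[OF P] by blast
  next
    fix a b assume "a \<in> J n" "b \<in> J n"
    then obtain s1 r1 s2 r2 where "s1 \<notin> Q" "s1 * a * p ^ n = r1 * x" "s2 \<notin> Q" "s2 * b * p ^ n = r2 * x"
      unfolding J_def by auto
    moreover have "(s1 * s2) * (a + b) * p ^ n = s2 * (s1 * a * p ^ n) + s1 * (s2 * b * p ^ n)"
      by (simp add: algebra_simps)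
    ultimately have "(s1 * s2) * (a + b) * p ^ n = (s2 * r1 + s1 * r2) * x" "s1 * s2 \<notin> Q"
      using prime_mult[OF P] by (auto simp: algebra_simps)
    then show "a + b \<in> J n" unfolding J_def by blast
  next
    fix a r assume "a \<in> J n"
    then obtain s1 r1 where "s1 \<notin> Q" "s1 * a * p ^ n = r1 * x" unfolding J_def by auto
    moreover have "s1 * (r * a) * p ^ n = r * (s1 * a * p ^ n)" by (simp add: algebra_simps)
    ultimately have "s1 * (r * a) * p ^ n = (r * r1) * x" by simp
    then show "r * a \<in> J n" unfolding J_def using \<open>s1 \<notin> Q\<close> by blast
  qed
  obtain M where M: "M \<in> range J" "\<forall>X\<in>range J. M \<subseteq> X \<longrightarrow> X = M"
    using noeth_max[OF N, of "range J"] JI by auto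
  then obtain K where K: "M = J K" by auto
  have "J K \<subseteq> J (Suc K)"
  proof
    fix y assume "y \<in> J K"
    then obtain s r where "s \<notin> Q" "s * y * p ^ K = r * x" unfolding J_def by auto
    moreover have "s * y * p ^ Suc K = p * (s * y * p ^ K)" by (simp add: algebra_simps)
    ultimately have "s * y * p ^ Suc K = (p * r) * x" by simp
    then show "y \<in> J (Suc K)" unfolding J_def using \<open>s \<notin> Q\<close> by blast
  qed
  then have JK: "J (Suc K) = J K" using M K by auto
  obtain s1 d where s1: "s1 \<notin> Q" "s1 * x = p ^ Suc K * d" using V[OF P L] H by blast
  have "1 * d * p ^ Suc K = s1 * x" using s1 by (simp add: algebra_simps)
  then have "d \<in> J (Suc K)" unfolding J_def using prime_one[OF P] by blast
  then have "d \<in> J K" using JK by simp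
  then obtain s r where sr: "s \<notin> Q" "s * d * p ^ K = r * x" unfolding J_def by auto
  have "(s * s1) * x = s * (p ^ Suc K * d)" using s1 by (simp add: algebra_simps)
  also have "\<dots> = p * (s * d * p ^ K)" by (simp add: algebra_simps)
  also have "\<dots> = (p * r) * x" using sr by (simp add: algebra_simps)
  finally have "s * s1 = p * r" using x by simp
  moreover have "p * r \<in> Q" using L P unfolding locpr_def prime_ideal_def using ideal_multR by blast
  ultimately show False using prime_mult[OF P sr(1) s1(1)] by simp
qed



lemma fr_add: "Fract (a::'a::idom) 1 + Fract b 1 = Fract (a + b) 1" by simp
lemma fr_mult: "Fract (a::'a::idom) 1 * Fract b 1 = Fract (a * b) 1" by simp
lemma fr_diff: "Fract (a::'a::idom) 1 - Fract b 1 = Fract (a - b) 1" by simp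
lemma fr_0: "Fract (0::'a::idom) 1 = 0" by (simp add: Zero_fract_def)
lemma fr_1: "Fract (1::'a::idom) 1 = 1" by (simp add: One_fract_def)
lemma fr_eq: "(Fract (a::'a::idom) 1 = Fract b 1) = (a = b)" by (simp add: eq_fract)
lemma fr_eq0: "(Fract (a::'a::idom) 1 = 0) = (a = 0)" using fr_eq[of a 0] fr_0 by metis

lemma integral_stable:
  fixes y :: "'a::idom fract"
  assumes N: "noetherian TYPE('a)" and IC: "integrally_closed TYPE('a)"
    and g0: "g0 \<noteq> 0" and stab: "\<And>k. \<exists>x. y ^ k * Fract g0 1 = Fract x 1"
  shows "\<exists>c. y = Fract c 1"
proof -
  define h :: "'a \<Rightarrow> 'a fract" where "h x = Fract x 1" for x
  have h0: "h 0 = 0" and h1: "h 1 = 1" using fr_0 fr_1 h_def by auto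
  have hadd: "h (a + b) = h a + h b" for a b unfolding h_def by (simp add: fr_add)
  have hmult: "h (a * b) = h a * h b" for a b unfolding h_def by (simp add: fr_mult)
  have hdiff: "h (a - b) = h a - h b" for a b unfolding h_def by (simp add: fr_diff)
  define I where "I n = {x. \<exists>c. h x = h g0 * (\<Sum>k\<le>n. h (c k) * y ^ k)}" for n
  have II: "is_ideal (I n)" for n unfolding is_ideal_def
  proof (intro conjI ballI allI)
    show "0 \<in> I n" unfolding I_def by (rule CollectI, rule exI[of _ "\<lambda>_. 0"]) (simp add: h0)
  next
    fix a b assume "a \<in> I n" "b \<in> I n"
    then obtain c1 c2 where c: "h a = h g0 * (\<Sum>k\<le>n. h (c1 k) * y ^ k)" "h b = h g0 * (\<Sum>k\<le>n. h (c2 k) * y ^ k)"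
      unfolding I_def by auto
    show "a + b \<in> I n" unfolding I_def
      by (rule CollectI, rule exI[of _ "\<lambda>k. c1 k + c2 k"]) (simp add: hadd c distrib_left distrib_right sum.distrib)
  next
    fix a r assume "a \<in> I n"
    then obtain c1 where c: "h a = h g0 * (\<Sum>k\<le>n. h (c1 k) * y ^ k)" unfolding I_def by auto
    show "r * a \<in> I n" unfolding I_def
      by (rule CollectI, rule exI[of _ "\<lambda>k. r * c1 k"]) (simp add: hmult c sum_distrib_left algebra_simps)
  qed
  obtain M where M: "M \<in> range I" "\<forall>X\<in>range I. M \<subseteq> X \<longrightarrow> X = M"
    using noeth_max[OF N, of "range I"] II by auto
  then obtain K where K: "M = I K" by auto
  have "I K \<subseteq> I (Suc K)"
  proof
    fix x assume "x \<in> I K"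
    then obtain c where c: "h x = h g0 * (\<Sum>k\<le>K. h (c k) * y ^ k)" unfolding I_def by auto
    define c' where "c' k = (if k \<le> K then c k else 0)" for k
    have "(\<Sum>k\<le>Suc K. h (c' k) * y ^ k) = (\<Sum>k\<le>K. h (c k) * y ^ k)"
      by (simp add: c'_def h0)
    then show "x \<in> I (Suc K)" unfolding I_def using c by (intro CollectI exI[of _ c']) simp
  qed
  then have IK: "I (Suc K) = I K" using M K by auto
  obtain x where x: "y ^ Suc K * h g0 = h x" using stab[of "Suc K"] unfolding h_def by blast
  define c1 :: "nat \<Rightarrow> 'a" where "c1 k = (if k = Suc K then 1 else 0)" for k
  have "(\<Sum>k\<le>Suc K. h (c1 k) * y ^ k) = y ^ Suc K"
    by (simp add: c1_def h0 h1)
  then have "x \<in> I (Suc K)" unfolding I_def using x by (intro CollectI exI[of _ c1]) (simp add: mult.commute)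
  then have "x \<in> I K" using IK by simp
  then obtain c where c: "h x = h g0 * (\<Sum>k\<le>K. h (c k) * y ^ k)" unfolding I_def by auto
  have hg0: "h g0 \<noteq> 0" using g0 fr_eq0 h_def by auto
  have yK: "y ^ Suc K = (\<Sum>k\<le>K. h (c k) * y ^ k)"
    using c x hg0 by (metis mult.commute mult_left_cancel)
  define p where "p = monom 1 (Suc K) - (\<Sum>k\<le>K. monom (c k) k)"
  have cp: "coeff p i = (if i = Suc K then 1 else 0) - (if i \<le> K then c i else 0)" for i
    unfolding p_def by (simp add: coeff_sum coeff_monom)
  have "degree p \<le> Suc K" by (rule degree_le) (auto simp: cp)
  moreover have "Suc K \<le> degree p" by (rule le_degree) (simp add: cp)
  ultimately have dp: "degree p = Suc K" by simp
  have lc: "lead_coeff p = 1" using dp cp by simp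
  have mp: "map_poly h p = monom 1 (Suc K) - (\<Sum>k\<le>K. monom (h (c k)) k)"
    by (rule poly_eqI) (simp add: coeff_map_poly h0 cp coeff_sum coeff_monom hdiff h1)
  have "poly (map_poly h p) y = y ^ Suc K - (\<Sum>k\<le>K. h (c k) * y ^ k)"
    unfolding mp by (simp add: poly_sum poly_monom)
  also have "\<dots> = 0" using yK by (simp only: diff_self)
  finally have "poly (map_poly h p) y = 0" .
  then show ?thesis using IC lc unfolding integrally_closed_def h_def by blast
qed



lemma prime_prod_set:
  assumes P: "prime_ideal Q"
  shows "finite F \<Longrightarrow> (\<forall>g\<in>F. f g \<notin> Q) \<Longrightarrow> prod f F \<notin> Q"
proof (induction F rule: finite_induct)
  case empty then show ?case using prime_one[OF P] by auto
next
  case (insert x F) then show ?case using prime_mult[OF P] by auto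
qed

lemma dedekind_locpr:
  fixes Q :: "'a::idom set"
  assumes D: "dedekind_domain TYPE('a)" and P: "prime_ideal Q" and Q0: "Q \<noteq> {0}"
  shows "\<exists>p. locpr Q p"
proof -
  have N: "noetherian TYPE('a)" and IC: "integrally_closed TYPE('a)"
    and MX: "\<And>P::'a set. prime_ideal P \<Longrightarrow> P \<noteq> {0} \<Longrightarrow> maximal_ideal P"
    using D unfolding dedekind_domain_def by auto
  have QI: "is_ideal Q" using P prime_ideal_def by blast
  have QU: "Q \<noteq> UNIV" using P prime_ideal_def by blast
  obtain a where a: "a \<in> Q" "a \<noteq> 0" using Q0 ideal_0[OF QI] by blast
  define C where "C y = {r. \<exists>s d. s \<notin> Q \<and> s * r * y = a * d}" for y
  have CI: "is_ideal (C y)" for y unfolding is_ideal_def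
  proof (intro conjI ballI allI)
    have "1 * 0 * y = a * 0" by simp
    then show "0 \<in> C y" unfolding C_def using prime_one[OF P] by blast
  next
    fix u v assume "u \<in> C y" "v \<in> C y"
    then obtain s1 d1 s2 d2 where h: "s1 \<notin> Q" "s1 * u * y = a * d1" "s2 \<notin> Q" "s2 * v * y = a * d2"
      unfolding C_def by auto
    have "(s1 * s2) * (u + v) * y = s2 * (s1 * u * y) + s1 * (s2 * v * y)" by (simp add: algebra_simps)
    also have "\<dots> = a * (s2 * d1 + s1 * d2)" using h by (simp add: algebra_simps)
    finally show "u + v \<in> C y" unfolding C_def using prime_mult[OF P h(1) h(3)] by blast
  next
    fix u r assume "u \<in> C y"
    then obtain s1 d1 where h: "s1 \<notin> Q" "s1 * u * y = a * d1" unfolding C_def by auto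
    have "s1 * (r * u) * y = r * (s1 * u * y)" by (simp add: algebra_simps)
    also have "\<dots> = a * (r * d1)" using h by (simp add: algebra_simps)
    finally show "r * u \<in> C y" unfolding C_def using h(1) by blast
  qed
  have C1: "1 \<in> C y \<longleftrightarrow> (\<exists>s d. s \<notin> Q \<and> s * y = a * d)" for y unfolding C_def by simp
  define S where "S = {C y |y. 1 \<notin> C y}"
  have "1 \<notin> C 1"
  proof
    assume "1 \<in> C 1"
    then obtain s d where "s \<notin> Q" "s * 1 = a * d" using C1 by blast
    then show False using ideal_multR[OF QI a(1)] by simp
  qed
  then have "S \<noteq> {}" unfolding S_def by blast
  then obtain M where M: "M \<in> S" "\<forall>X\<in>S. M \<subseteq> X \<longrightarrow> X = M"
    using noeth_max[OF N, of S] CI unfolding S_def by blast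
  then obtain b where b: "M = C b" "1 \<notin> C b" unfolding S_def by blast
  have b0: "b \<noteq> 0"
  proof
    assume "b = 0"
    then have "1 * b = a * 0" by simp
    then show False using b(2) C1 prime_one[OF P] by blast
  qed
  have CbQ: "C b \<subseteq> Q"
  proof
    fix r assume "r \<in> C b"
    then obtain s d where h: "s \<notin> Q" "s * r * b = a * d" unfolding C_def by auto
    show "r \<in> Q"
    proof (rule ccontr)
      assume "r \<notin> Q"
      then have "s * r \<notin> Q" using prime_mult[OF P h(1)] by blast
      then show False using h(2) b(2) C1 by blast
    qed
  qed
  have Cprime: "prime_ideal (C b)" unfolding prime_ideal_def
  proof (intro conjI allI impI)
    show "is_ideal (C b)" by (rule CI)
    show "C b \<noteq> UNIV" using b(2) by blast
  next
    fix r1 r2 assume r12: "r1 * r2 \<in> C b"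
    show "r1 \<in> C b \<or> r2 \<in> C b"
    proof (rule disjCI)
      assume r2: "r2 \<notin> C b"
      have sub: "C b \<subseteq> C (r2 * b)"
      proof
        fix r assume "r \<in> C b"
        then obtain s d where h: "s \<notin> Q" "s * r * b = a * d" unfolding C_def by auto
        have "s * r * (r2 * b) = a * (r2 * d)" using h by (metis mult.assoc mult.left_commute)
        then show "r \<in> C (r2 * b)" unfolding C_def using h(1) by blast
      qed
      have "1 \<notin> C (r2 * b)"
      proof
        assume "1 \<in> C (r2 * b)"
        then obtain s d where h: "s \<notin> Q" "s * (r2 * b) = a * d" using C1 by blast
        then have "s * r2 * b = a * d" by (simp add: mult.assoc)
        then show False using r2 h(1) unfolding C_def by blast
      qed
      then have "C (r2 * b) \<in> S" unfolding S_def by blast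
      then have eq: "C (r2 * b) = C b" using M b sub by blast
      obtain s d where h: "s \<notin> Q" "s * (r1 * r2) * b = a * d" using r12 unfolding C_def by auto
      then have "s * r1 * (r2 * b) = a * d" by (simp add: mult.assoc)
      then have "r1 \<in> C (r2 * b)" unfolding C_def using h(1) by blast
      then show "r1 \<in> C b" using eq by simp
    qed
  qed
  have "a \<in> C b"
  proof -
    have "1 * a * b = a * b" by simp
    then show ?thesis unfolding C_def using prime_one[OF P] by blast
  qed
  then have "C b \<noteq> {0}" using a(2) by blast
  then have "maximal_ideal (C b)" using MX Cprime by blast
  then have "Q = C b" using QI CbQ QU unfolding maximal_ideal_def by blast
  then have QB: "\<forall>q\<in>Q. \<exists>s d. s \<notin> Q \<and> s * q * b = a * d" unfolding C_def by blast
  show ?thesis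
  proof (cases "\<exists>q0 s0 d0. q0 \<in> Q \<and> s0 \<notin> Q \<and> d0 \<notin> Q \<and> s0 * q0 * b = a * d0")
    case True
    then obtain q0 s0 d0 where h0: "q0 \<in> Q" "s0 \<notin> Q" "d0 \<notin> Q" "s0 * q0 * b = a * d0" by blast
    have "q0 \<noteq> 0"
    proof
      assume "q0 = 0"
      then have "d0 = 0" using h0(4) a(2) by simp
      then show False using h0(3) ideal_0[OF QI] by simp
    qed
    moreover have "\<forall>q\<in>Q. \<exists>s d. s \<notin> Q \<and> s * q = q0 * d"
    proof
      fix q assume "q \<in> Q"
      then obtain s c where h: "s \<notin> Q" "s * q * b = a * c" using QB by blast
      have "b * (s * d0 * q) = d0 * (s * q * b)" by (simp add: algebra_simps)
      also have "\<dots> = c * (s0 * q0 * b)" using h h0 by (simp add: algebra_simps)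
      also have "\<dots> = b * (q0 * (c * s0))" by (simp add: algebra_simps)
      finally have "s * d0 * q = q0 * (c * s0)" using b0 by simp
      then show "\<exists>s d. s \<notin> Q \<and> s * q = q0 * d" using prime_mult[OF P h(1) h0(3)] by blast
    qed
    ultimately show ?thesis using h0(1) unfolding locpr_def by blast
  next
    case False
    then have Dq: "\<And>q s d. q \<in> Q \<Longrightarrow> s \<notin> Q \<Longrightarrow> s * q * b = a * d \<Longrightarrow> d \<in> Q" by blast
    obtain F where F: "finite F" "Q = ideal_span F" using N QI unfolding noetherian_def by blast
    have FQ: "F \<subseteq> Q" using F span_sub by blast
    have "\<forall>g\<in>F. \<exists>sd. fst sd \<notin> Q \<and> fst sd * g * b = a * snd sd" using QB FQ by fastforce
    then obtain sd where sd: "\<forall>g\<in>F. fst (sd g) \<notin> Q \<and> fst (sd g) * g * b = a * snd (sd g)"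
      by metis
    define sf where "sf g = fst (sd g)" for g
    define df where "df g = snd (sd g)" for g
    have sdf: "\<And>g. g \<in> F \<Longrightarrow> sf g \<notin> Q \<and> sf g * g * b = a * df g" using sd sf_def df_def by auto
    have dfQ: "\<And>g. g \<in> F \<Longrightarrow> df g \<in> Q" using sdf Dq FQ by blast
    define T where "T = prod sf F"
    have TQ: "T \<notin> Q" unfolding T_def using prime_prod_set[OF P F(1)] sdf by blast
    define X where "X = {q. \<exists>q'\<in>Q. T * b * q = a * q'}"
    have XI: "is_ideal X" unfolding is_ideal_def X_def
    proof (intro conjI ballI allI)
      show "0 \<in> {q. \<exists>q'\<in>Q. T * b * q = a * q'}" using ideal_0[OF QI] by force
    next
      fix u v assume "u \<in> {q. \<exists>q'\<in>Q. T * b * q = a * q'}" "v \<in> {q. \<exists>q'\<in>Q. T * b * q = a * q'}"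
      then obtain u' v' where "u' \<in> Q" "v' \<in> Q" "T * b * u = a * u'" "T * b * v = a * v'" by auto
      then have "u' + v' \<in> Q \<and> T * b * (u + v) = a * (u' + v')" using ideal_add[OF QI] by (simp add: algebra_simps)
      then show "u + v \<in> {q. \<exists>q'\<in>Q. T * b * q = a * q'}" by blast
    next
      fix u r assume "u \<in> {q. \<exists>q'\<in>Q. T * b * q = a * q'}"
      then obtain u' where "u' \<in> Q" "T * b * u = a * u'" by auto
      then have "r * u' \<in> Q \<and> T * b * (r * u) = a * (r * u')" using ideal_multL[OF QI]
        by (metis mult.assoc mult.left_commute)
      then show "r * u \<in> {q. \<exists>q'\<in>Q. T * b * q = a * q'}" by blast
    qed
    have "F \<subseteq> X"
    proof
      fix g assume g: "g \<in> F"
      have "T = sf g * prod sf (F - {g})" unfolding T_def using F(1) g by (simp add: prod.remove)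
      then have "T * b * g = prod sf (F - {g}) * (sf g * g * b)" by (simp add: algebra_simps)
      also have "\<dots> = a * (prod sf (F - {g}) * df g)" using sdf[OF g] by (simp add: algebra_simps)
      finally show "g \<in> X" unfolding X_def using ideal_multL[OF QI dfQ[OF g]] by blast
    qed
    then have QX: "Q \<subseteq> X" using F span_least[OF XI] by simp
    define y where "y = Fract (T * b) a"
    have ymul: "y * Fract q 1 = Fract q' 1" if "T * b * q = a * q'" for q q'
      unfolding y_def using that a(2) by (simp add: eq_fract)
    have stab: "\<exists>x\<in>Q. y ^ k * Fract a 1 = Fract x 1" for k
    proof (induction k)
      case 0 then show ?case using a(1) by auto
    next
      case (Suc k)
      then obtain x where x: "x \<in> Q" "y ^ k * Fract a 1 = Fract x 1" by blast
      then obtain x' where x': "x' \<in> Q" "T * b * x = a * x'" using QX unfolding X_def by blast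
      have "y ^ Suc k * Fract a 1 = y * Fract x 1" using x(2) by (simp add: mult.assoc)
      also have "\<dots> = Fract x' 1" using ymul[OF x'(2)] .
      finally show ?case using x'(1) by blast
    qed
    obtain c where "y = Fract c 1" using integral_stable[OF N IC a(2)] stab by blast
    then have "T * b = a * c" unfolding y_def using a(2) by (simp add: eq_fract mult.commute)
    then show ?thesis using b(2) C1 TQ by blast
  qed
qed



lemma poly_f: "poly (\<Prod>r\<in>#T. [:-r, 1:]) c = (\<Prod>r\<in>#T. c - (r::'a::comm_ring_1))"
  by (simp add: poly_prod_mset)

lemma sum_mem:
  "(r::'a) \<in># (\<Sum>i\<in>{1..(e::nat)}. Ts i) \<Longrightarrow> \<exists>i\<in>{1..e}. r \<in># Ts i"
proof (induction e)
  case 0 then show ?case by simp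
next
  case (Suc e)
  have "{1..Suc e} = insert (Suc e) {1..e}" by (simp add: atLeastAtMostSuc_conv)
  then show ?case using Suc by auto
qed

lemma sum_filter_size:
  "(\<forall>i\<in>{1..(e::nat)}. size (filter_mset P (Ts i)) = 1) \<Longrightarrow> size (filter_mset P (\<Sum>i\<in>{1..e}. Ts i)) = e"
proof (induction e)
  case 0 then show ?case by simp
next
  case (Suc e)
  have "{1..Suc e} = insert (Suc e) {1..e}" by (simp add: atLeastAtMostSuc_conv)
  then show ?case using Suc by auto
qed

lemma sum_pow:
  assumes P: "prime_ideal Q"
  shows "(\<forall>i\<in>{1..e}. \<exists>t\<in>#Ts i. c - t \<in> Q) \<Longrightarrow> (\<Prod>r\<in>#(\<Sum>i\<in>{1..e}. Ts i). c - (r::'a::comm_ring_1)) \<in> ideal_pow Q e"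
proof (induction e)
  case 0 then show ?case by simp
next
  case (Suc e)
  have e: "{1..Suc e} = insert (Suc e) {1..e}" by (simp add: atLeastAtMostSuc_conv)
  have "Suc e \<in> {1..Suc e}" by simp
  then obtain t where "t \<in># Ts (Suc e)" "c - t \<in> Q" using Suc.prems by blast
  then have "(\<Prod>r\<in>#Ts (Suc e). c - r) \<in> Q" using prime_prod_mset[OF P, of "\<lambda>r. c - r"] by blast
  moreover have "(\<Prod>r\<in>#(\<Sum>i\<in>{1..e}. Ts i). c - r) \<in> ideal_pow Q e" using Suc by auto
  ultimately have "(\<Prod>r\<in>#Ts (Suc e). c - r) * (\<Prod>r\<in>#(\<Sum>i\<in>{1..e}. Ts i). c - r) \<in> ideal_pow Q (Suc e)"
    by (rule pow_Suc_mem)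
  then show ?case unfolding e by simp
qed

lemma prodform:
  assumes P: "prime_ideal Q"
  shows "(\<forall>r\<in>#M. w - r \<in> Q \<longrightarrow> (\<exists>s u. s \<notin> Q \<and> u \<notin> Q \<and> s * (w - r) = p * u)) \<Longrightarrow>
    \<exists>S U. S \<notin> Q \<and> U \<notin> Q \<and> S * (\<Prod>r\<in>#M. w - r) = p ^ size (filter_mset (\<lambda>r. w - r \<in> Q) M) * (U::'a::comm_ring_1)"
proof (induction M)
  case empty
  then show ?case using prime_one[OF P] by (intro exI[of _ 1]) auto
next
  case (add x M)
  then obtain S U where SU: "S \<notin> Q" "U \<notin> Q" "S * (\<Prod>r\<in>#M. w - r) = p ^ size (filter_mset (\<lambda>r. w - r \<in> Q) M) * U"
    by auto
  show ?case
  proof (cases "w - x \<in> Q")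
    case True
    then obtain s u where su: "s \<notin> Q" "u \<notin> Q" "s * (w - x) = p * u" using add.prems by auto
    have "(S * s) * (\<Prod>r\<in>#add_mset x M. w - r) = (s * (w - x)) * (S * (\<Prod>r\<in>#M. w - r))"
      by (simp add: algebra_simps)
    also have "\<dots> = p ^ size (filter_mset (\<lambda>r. w - r \<in> Q) (add_mset x M)) * (U * u)"
      using SU su True by (simp add: algebra_simps)
    finally show ?thesis using prime_mult[OF P SU(1) su(1)] prime_mult[OF P SU(2) su(2)] by blast
  next
    case False
    have "S * (\<Prod>r\<in>#add_mset x M. w - r) = (w - x) * (S * (\<Prod>r\<in>#M. w - r))"
      by (simp add: algebra_simps)
    also have "\<dots> = p ^ size (filter_mset (\<lambda>r. w - r \<in> Q) (add_mset x M)) * (U * (w - x))"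
      using SU False by (simp add: algebra_simps)
    finally show ?thesis using SU prime_mult[OF P SU(2) False] by blast
  qed
qed

lemma crs_ex: "complete_residue_system Q M \<Longrightarrow> \<exists>t\<in>#M. c - t \<in> Q"
  unfolding complete_residue_system_def
  by (metis filter_mset_eq_mempty_iff one_neq_zero size_empty)

theorem lemma3p2:
  fixes T :: "'a::idom multiset" and Q :: "'a set"
  assumes "prime_ideal Q" and "Q \<noteq> {0}"
  shows "(fixed_divisor (\<Prod>r\<in>#T. [:-r, 1:]) \<subseteq> Q \<longleftrightarrow> contains_residue_system Q T) \<and>
    (\<forall>(T0 :: 'a multiset) (Ts :: nat \<Rightarrow> 'a multiset) (e :: nat).
       dedekind_domain TYPE('a) \<and>
       T = T0 + (\<Sum>i\<in>{1..e}. Ts i) \<and>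
       (\<forall>i\<in>{1..e}. complete_residue_system Q (Ts i)) \<and>
       (\<forall>i\<in>{1..e}. \<forall>j\<in>{1..e}. \<forall>s t. i \<noteq> j \<and> s \<in># Ts i \<and> t \<in># Ts j \<and> s - t \<in> Q
            \<longrightarrow> s - t \<in> ideal_pow Q 2) \<and>
       (\<exists>z. \<forall>s. s \<in># T0 \<longrightarrow> s - z \<notin> Q)
     \<longrightarrow> ideal_val Q (fixed_divisor (\<Prod>r\<in>#T. [:-r, 1:])) = e)"
proof -
  note P = assms(1)
  have QI: "is_ideal Q" using P prime_ideal_def by blast
  define f where "f = (\<Prod>r\<in>#T. [:-r, 1:])"
  have pf: "poly f c = (\<Prod>r\<in>#T. c - r)" for c unfolding f_def by (rule poly_f)
  have fdsub: "fixed_divisor f \<subseteq> I \<longleftrightarrow> range (poly f) \<subseteq> I" if "is_ideal I" for I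
  proof
    assume "fixed_divisor f \<subseteq> I"
    then show "range (poly f) \<subseteq> I" unfolding fixed_divisor_def using span_sub[of "range (poly f)"] by (rule order_trans[rotated])
  next
    assume "range (poly f) \<subseteq> I"
    then show "fixed_divisor f \<subseteq> I" unfolding fixed_divisor_def by (rule span_least[OF that])
  qed
  have part1: "fixed_divisor f \<subseteq> Q \<longleftrightarrow> contains_residue_system Q T"
  proof -
    have "poly f c \<in> Q \<longleftrightarrow> (\<exists>t\<in>#T. c - t \<in> Q)" for c
      unfolding pf using prime_prod_mset[OF P, of "\<lambda>r. c - r" T] by simp
    then show ?thesis unfolding fdsub[OF QI] contains_residue_system_def by blast
  qed
  have part2: "ideal_val Q (fixed_divisor f) = e"
    if D: "dedekind_domain TYPE('a)" and TT: "T = T0 + (\<Sum>i\<in>{1..e}. Ts i)"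
      and CR: "\<forall>i\<in>{1..e}. complete_residue_system Q (Ts i)"
      and SQ: "\<forall>i\<in>{1..e}. \<forall>j\<in>{1..e}. \<forall>s t. i \<noteq> j \<and> s \<in># Ts i \<and> t \<in># Ts j \<and> s - t \<in> Q
            \<longrightarrow> s - t \<in> ideal_pow Q 2"
      and Z: "\<exists>z. \<forall>s. s \<in># T0 \<longrightarrow> s - z \<notin> Q"
    for T0 Ts e
  proof -
    have N: "noetherian TYPE('a)" using D unfolding dedekind_domain_def by blast
    obtain p where L: "locpr Q p" using dedekind_locpr[OF D P assms(2)] by blast
    have pQ: "p \<in> Q" and p0: "p \<noteq> 0" using L unfolding locpr_def by auto
    obtain z where z: "\<forall>s. s \<in># T0 \<longrightarrow> s - z \<notin> Q" using Z by blast
    have vals: "poly f c \<in> ideal_pow Q e" for c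
    proof -
      have "(\<Prod>r\<in>#(\<Sum>i\<in>{1..e}. Ts i). c - r) \<in> ideal_pow Q e"
        using sum_pow[OF P] crs_ex CR by blast
      then show ?thesis unfolding pf TT by (simp add: ideal_multL[OF pow_ideal])
    qed
    have fdQe: "fixed_divisor f \<subseteq> ideal_pow Q e" using fdsub[OF pow_ideal] vals by blast
    have lower: "e \<le> elem_val Q b" if bin: "b \<in> fixed_divisor f" and bn0: "b \<noteq> 0" for b
    proof -
      obtain M where M: "b \<notin> ideal_pow Q M" using krull[OF P L N bn0] by blast
      have bd: "y \<le> M" if "b \<in> ideal_pow Q y" for y
      proof (rule ccontr)
        assume "\<not> y \<le> M"
        then have "ideal_pow Q y \<subseteq> ideal_pow Q M" using pow_mono[OF QI] by simp
        then show False using M that by blast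
      qed
      show ?thesis unfolding elem_val_def
        by (rule Greatest_le_nat[of _ e M]) (use bin fdQe bd in auto)
    qed
    obtain w where W0: "\<forall>s. s \<in># T0 \<longrightarrow> w - s \<notin> Q"
      and W1: "\<forall>i\<in>{1..e}. \<forall>r. r \<in># Ts i \<longrightarrow> w - r \<in> Q \<longrightarrow> (\<exists>s u. s \<notin> Q \<and> u \<notin> Q \<and> s * (w - r) = p * u)"
    proof (cases "e = 0")
      case True
      have "\<forall>s. s \<in># T0 \<longrightarrow> z - s \<notin> Q"
      proof (intro allI impI)
        fix s assume "s \<in># T0"
        then have "s - z \<notin> Q" using z by blast
        then show "z - s \<notin> Q" using ideal_neg[OF QI, of "z - s"] by auto
      qed
      then show ?thesis using that True by auto
    next
      case False
      then have e1: "1 \<in> {1..e}" by simp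
      obtain t1 where t1: "t1 \<in># Ts 1" "z - t1 \<in> Q" using crs_ex CR e1 by blast
      define w where "w = t1 + p"
      have "\<forall>s. s \<in># T0 \<longrightarrow> w - s \<notin> Q"
      proof (intro allI impI notI)
        fix s assume s: "s \<in># T0" "w - s \<in> Q"
        have eq: "s - z = -((w - s) + (z - t1) - p)" unfolding w_def by (simp add: algebra_simps)
        have "(w - s) + (z - t1) - p \<in> Q" using s t1 pQ ideal_diff[OF QI] ideal_add[OF QI] by blast
        then have "-((w - s) + (z - t1) - p) \<in> Q" by (rule ideal_neg[OF QI])
        then have "s - z \<in> Q" by (subst eq)
        then show False using z s by blast
      qed
      moreover have "\<forall>i\<in>{1..e}. \<forall>r. r \<in># Ts i \<longrightarrow> w - r \<in> Q \<longrightarrow> (\<exists>s u. s \<notin> Q \<and> u \<notin> Q \<and> s * (w - r) = p * u)"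
      proof (intro ballI allI impI)
        fix i r assume i: "i \<in> {1..e}" and r: "r \<in># Ts i" "w - r \<in> Q"
        have tr: "t1 - r \<in> Q" using ideal_diff[OF QI r(2) pQ] unfolding w_def by (simp add: algebra_simps)
        have "t1 - r \<in> ideal_pow Q 2"
        proof (cases "i = 1")
          case True
          have "size (filter_mset (\<lambda>t. w - t \<in> Q) (Ts 1)) = 1" using CR e1 unfolding complete_residue_system_def by blast
          then obtain x where x: "filter_mset (\<lambda>t. w - t \<in> Q) (Ts 1) = {#x#}" using size_1_singleton_mset by blast
          have "r \<in># filter_mset (\<lambda>t. w - t \<in> Q) (Ts 1)" using r True by simp
          then have r1: "r = x" unfolding x by simp
          have "t1 \<in># filter_mset (\<lambda>t. w - t \<in> Q) (Ts 1)" using t1 pQ unfolding w_def by simp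
          then have "t1 = x" unfolding x by simp
          then have "r = t1" using r1 by simp
          then show ?thesis using ideal_0[OF pow_ideal] by simp
        next
          case False
          then have "1 \<noteq> i" by simp
          then show ?thesis by (intro SQ[rule_format, OF e1 i]) (use t1 r tr in auto)
        qed
        then obtain s d where sd: "s \<notin> Q" "s * (t1 - r) = p ^ 2 * d" using V[OF P L] by blast
        have "s * (w - r) = s * p + s * (t1 - r)" unfolding w_def by (simp add: algebra_simps)
        also have "\<dots> = s * p + p ^ 2 * d" using sd(2) by simp
        also have "\<dots> = p * (s + p * d)" by (simp add: algebra_simps power2_eq_square)
        finally have "s * (w - r) = p * (s + p * d)" .
        moreover have "s + p * d \<notin> Q"
        proof
          assume "s + p * d \<in> Q"
          then have "(s + p * d) - p * d \<in> Q" using ideal_diff[OF QI _ ideal_multR[OF QI pQ]] by blast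
          then show False using sd(1) by simp
        qed
        ultimately show "\<exists>s u. s \<notin> Q \<and> u \<notin> Q \<and> s * (w - r) = p * u" using sd(1) by blast
      qed
      ultimately show ?thesis using that by blast
    qed
    have cond: "\<forall>r\<in>#T. w - r \<in> Q \<longrightarrow> (\<exists>s u. s \<notin> Q \<and> u \<notin> Q \<and> s * (w - r) = p * u)"
    proof (intro ballI impI)
      fix r assume r: "r \<in># T" "w - r \<in> Q"
      have "r \<in># T0 + (\<Sum>i\<in>{1..e}. Ts i)" using r(1) unfolding TT .
      moreover have "r \<notin># T0" using W0 r(2) by blast
      ultimately have "r \<in># (\<Sum>i\<in>{1..e}. Ts i)" by simp
      then obtain i where i: "i \<in> {1..e}" "r \<in># Ts i" using sum_mem[of r Ts e] by blast
      show "\<exists>s u. s \<notin> Q \<and> u \<notin> Q \<and> s * (w - r) = p * u" using W1 i r(2) by blast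
    qed
    have cnt: "size (filter_mset (\<lambda>r. w - r \<in> Q) T) = e"
    proof -
      have "filter_mset (\<lambda>r. w - r \<in> Q) T0 = {#}" using W0 by simp
      moreover have "size (filter_mset (\<lambda>r. w - r \<in> Q) (\<Sum>i\<in>{1..e}. Ts i)) = e"
        by (rule sum_filter_size) (use CR in \<open>auto simp: complete_residue_system_def\<close>)
      ultimately show ?thesis unfolding TT by simp
    qed
    obtain S U where SU: "S \<notin> Q" "U \<notin> Q" "S * poly f w = p ^ e * U"
      using prodform[OF P cond] cnt unfolding pf by auto
    have notin: "poly f w \<notin> ideal_pow Q (Suc e)"
    proof
      assume "poly f w \<in> ideal_pow Q (Suc e)"
      then obtain s d where sd: "s \<notin> Q" "s * poly f w = p ^ Suc e * d" using V[OF P L] by blast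
      have "p ^ e * (s * U) = s * (S * poly f w)" using SU by (simp add: algebra_simps)
      also have "\<dots> = S * (s * poly f w)" by (simp add: algebra_simps)
      also have "\<dots> = p ^ e * (p * (S * d))" using sd by (simp add: algebra_simps)
      finally have "s * U = p * (S * d)" using p0 by simp
      moreover have "p * (S * d) \<in> Q" using ideal_multR[OF QI pQ] by blast
      ultimately show False using prime_mult[OF P sd(1) SU(2)] by simp
    qed
    have fw0: "poly f w \<noteq> 0" using notin ideal_0[OF pow_ideal] by metis
    have ev: "elem_val Q (poly f w) = e" unfolding elem_val_def
    proof (rule Greatest_equality)
      show "poly f w \<in> ideal_pow Q e" by (rule vals)
    next
      fix y assume y: "poly f w \<in> ideal_pow Q y"
      show "y \<le> e"
      proof (rule ccontr)
        assume "\<not> y \<le> e"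
        then have "Suc e \<le> y" by simp
        then have "ideal_pow Q y \<subseteq> ideal_pow Q (Suc e)" by (rule pow_mono[OF QI])
        then show False using y notin by blast
      qed
    qed
    have fwin: "poly f w \<in> fixed_divisor f" unfolding fixed_divisor_def using span_sub by blast
    show ?thesis unfolding ideal_val_def
    proof (rule Least_equality)
      show "\<exists>a\<in>fixed_divisor f. a \<noteq> 0 \<and> elem_val Q a = e" using fwin fw0 ev by blast
    next
      fix n assume "\<exists>a\<in>fixed_divisor f. a \<noteq> 0 \<and> elem_val Q a = n"
      then show "e \<le> n" using lower by blast
    qed
  qed
  show ?thesis unfolding f_def[symmetric]
  proof (intro conjI allI impI)
    show "fixed_divisor f \<subseteq> Q \<longleftrightarrow> contains_residue_system Q T" by (rule part1)
  next
    fix T0 :: "'a multiset" and Ts :: "nat \<Rightarrow> 'a multiset" and e :: nat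
    assume H: "dedekind_domain TYPE('a) \<and>
       T = T0 + (\<Sum>i\<in>{1..e}. Ts i) \<and>
       (\<forall>i\<in>{1..e}. complete_residue_system Q (Ts i)) \<and>
       (\<forall>i\<in>{1..e}. \<forall>j\<in>{1..e}. \<forall>s t. i \<noteq> j \<and> s \<in># Ts i \<and> t \<in># Ts j \<and> s - t \<in> Q
            \<longrightarrow> s - t \<in> ideal_pow Q 2) \<and>
       (\<exists>z. \<forall>s. s \<in># T0 \<longrightarrow> s - z \<notin> Q)"
    show "ideal_val Q (fixed_divisor f) = e"
      using H by (elim conjE) (rule part2)
  qed
qed

end
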